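(* Let $\alpha_1,\ldots,\alpha_r>0$, $\beta\ge 0$ and $d>1$ be real numbers. For $1\le i\le r$ and $n\in\mathbb{N}=\{0,1,2,\ldots\}$ define intervals $I_{i,n}=[\alpha_i d^n-\beta,\ \alpha_i d^n+\beta]$, and let $I=\bigcup_{1\le i\le r}\bigcup_{n\in\mathbb{N}}I_{i,n}$. Then there are constants $C_1,C_2>0$, depending only on $\alpha_1,\ldots,\alpha_r,\beta,d$, such that for every $T\ge C_1$ the set $[0,T]\setminus I$ contains an interval of length at least $C_2T/\log(T)$. *)

theory Defs
  imports "HOL-Analysis.Analysis"
begin

definition I_int :: "(nat \<Rightarrow> real) \<Rightarrow> real \<Rightarrow> real \<Rightarrow> nat \<Rightarrow> nat \<Rightarrow> real set" where
  "I_int \<alpha> \<beta> d i n = {\<alpha> i * d ^ n - \<beta> .. \<alpha> i * d ^ n + \<beta>}"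

definition I_union :: "nat \<Rightarrow> (nat \<Rightarrow> real) \<Rightarrow> real \<Rightarrow> real \<Rightarrow> real set" where
  "I_union r \<alpha> \<beta> d = (\<Union>i\<in>{1..r}. \<Union>n. I_int \<alpha> \<beta> d i n)"

end

theory Submission
  imports Defs
begin

theorem lemma4p3:
  fixes r :: nat and \<alpha> :: "nat \<Rightarrow> real" and \<beta> d :: real
  assumes "\<forall>i\<in>{1..r}. \<alpha> i > 0" and "\<beta> \<ge> 0" and "d > 1"
  shows "\<exists>C1 C2. C1 > 0 \<and> C2 > 0 \<and>
           (\<forall>T. T \<ge> C1 \<longrightarrow>
              (\<exists>a b. b - a \<ge> C2 * T / ln T \<and> {a..b} \<subseteq> {0..T} - I_union r \<alpha> \<beta> d))"
proof -
  define C2 where "C2 = (1 - 1/d) / (2 * (r+1))"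
  define C1 where "C1 = max 3 (4 * (\<beta>+1) * (r+1) / (1 - 1/d))"
  have d1: "1 - 1/d > 0" using assms(3) by simp
  have C2pos: "C2 > 0" unfolding C2_def using d1 by simp
  have C1pos: "C1 > 0" unfolding C1_def by simp
  have main: "\<exists>a b. b - a \<ge> C2 * T / ln T \<and> {a..b} \<subseteq> {0..T} - I_union r \<alpha> \<beta> d"
    if T: "T \<ge> C1" for T
  proof -
    have T3: "T \<ge> 3" using T unfolding C1_def by simp
    have Tbig: "T \<ge> 4 * (\<beta>+1) * (r+1) / (1 - 1/d)" using T unfolding C1_def by simp
    define x0 where "x0 = T / d"
    define l where "l = (T - T/d) / (r+1)"
    have "T / d < T" using T3 assms(3) by (simp add: divide_less_eq)
    then have lpos: "l > 0" unfolding l_def by simp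
    have lrel: "l = T * (1 - 1/d) / (r+1)" unfolding l_def by (simp add: algebra_simps)
    have lbig: "l \<ge> 4 * (\<beta>+1)"
    proof -
      have "T * (1 - 1/d) \<ge> 4 * (\<beta>+1) * (r+1)" using Tbig d1 by (simp add: divide_simps)
      then show ?thesis unfolding lrel by (simp add: divide_simps mult.commute)
    qed
    have x0pos: "x0 > 0" unfolding x0_def using T3 assms(3) by simp
    have x0end: "x0 + (r+1) * l = T" unfolding x0_def l_def by simp
    define N where "N i = (LEAST n. \<alpha> i * d ^ n \<ge> x0)" for i
    define h where "h i = nat \<lfloor>(\<alpha> i * d ^ (N i) - x0) / l\<rfloor>" for i
    have "card (h ` {1..r}) \<le> r" using card_image_le[of "{1..r}" h] by simp
    then have "\<not> {0..r} \<subseteq> h ` {1..r}" using card_mono[of "h ` {1..r}" "{0..r}"] by force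
    then obtain k0 where k0: "k0 \<in> {0..r}" "k0 \<notin> h ` {1..r}" by blast
    define k where "k = k0"
    have k: "k \<le> r" "k \<notin> h ` {1..r}" using k0 unfolding k_def by auto
    define a where "a = x0 + k * l + \<beta> + 1"
    define b where "b = x0 + (k+1) * l - \<beta> - 1"
    have len: "b - a \<ge> C2 * T / ln T"
    proof -
      have e3: "exp 1 \<le> T" using exp_le T3 by linarith
      have ln1: "ln T \<ge> 1"
      proof -
        have "ln (exp 1) \<le> ln T" using e3 T3 by (subst ln_le_cancel_iff) auto
        then show ?thesis by simp
      qed
      have "C2 * T / ln T \<le> C2 * T / 1"
        using ln1 C2pos T3 by (intro divide_left_mono) auto
      then have "C2 * T / ln T \<le> C2 * T" by simp
      also have "C2 * T = l / 2" unfolding C2_def lrel by (simp add: field_simps)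
      also have "l / 2 \<le> b - a" unfolding a_def b_def using lbig by (simp add: algebra_simps)
      finally show ?thesis .
    qed
    have sub: "{a..b} \<subseteq> {0..T}"
    proof -
      have "a \<ge> 0" unfolding a_def using x0pos lpos assms(2) by simp
      moreover have "b \<le> T"
      proof -
        have "real (k+1) * l \<le> real (r+1) * l" using k(1) lpos by (intro mult_right_mono) auto
        then show ?thesis unfolding b_def using x0end assms(2) by simp
      qed
      ultimately show ?thesis by auto
    qed
    have disj: "y \<notin> I_union r \<alpha> \<beta> d" if y: "y \<in> {a..b}" for y
    proof
      assume "y \<in> I_union r \<alpha> \<beta> d"
      then obtain i n where i: "i \<in> {1..r}" and yI: "y \<in> I_int \<alpha> \<beta> d i n"
        unfolding I_union_def by auto
      define c where "c = \<alpha> i * d ^ n"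
      have cy: "c - \<beta> \<le> y" "y \<le> c + \<beta>" using yI unfolding I_int_def c_def by auto
      have c1: "x0 + k * l \<le> c" using cy y unfolding a_def by auto
      have c2: "c < x0 + (k+1) * l" using cy y unfolding b_def by auto
      have cx0: "c \<ge> x0" using c1 lpos by (smt (verit) of_nat_0_le_iff mult_nonneg_nonneg)
      have cT: "c < T"
      proof -
        have "real (k+1) * l \<le> real (r+1) * l" using k(1) lpos by (intro mult_right_mono) auto
        then show ?thesis using c2 x0end by simp
      qed
      have ai: "\<alpha> i > 0" using assms(1) i by auto
      have Nle: "N i \<le> n" unfolding N_def by (rule Least_le) (use cx0 c_def in simp)
      have NI: "\<alpha> i * d ^ N i \<ge> x0" unfolding N_def by (rule LeastI[of _ n]) (use cx0 c_def in simp)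
      have Neq: "N i = n"
      proof (rule ccontr)
        assume "N i \<noteq> n"
        then have "Suc (N i) \<le> n" using Nle by simp
        then have "d ^ Suc (N i) \<le> d ^ n" using assms(3) by (intro power_increasing) auto
        then have "\<alpha> i * d ^ Suc (N i) \<le> c" unfolding c_def using ai by simp
        moreover have "\<alpha> i * d ^ Suc (N i) = d * (\<alpha> i * d ^ N i)" by simp
        moreover have "d * x0 = T" unfolding x0_def using assms(3) by simp
        moreover have "d * x0 \<le> d * (\<alpha> i * d ^ N i)" using NI assms(3) by simp
        ultimately show False using cT by linarith
      qed
      have fl: "\<lfloor>(c - x0) / l\<rfloor> = int k"
      proof -
        have "real k \<le> (c - x0) / l" using c1 lpos by (simp add: divide_simps)
        moreover have "(c - x0) / l < real k + 1" using c2 lpos by (simp add: divide_simps algebra_simps)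
        ultimately show ?thesis by (simp add: floor_eq_iff)
      qed
      have "h i = k" unfolding h_def using Neq fl c_def by simp
      then show False using k(2) i by auto
    qed
    show ?thesis using len sub disj by blast
  qed
  show ?thesis using C1pos C2pos main by blast
qed

end
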